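(* Let $s,c\ge 1$ be integers, and suppose that every $s\mathcal{O}$-free graph $G$ with no cycle of length four has at most $|G|^{c}$ ordered induced paths. Then every $s\mathcal{O}$-free graph $G$ has at most $|G|^{d}$ ordered induced paths, where $d=2+(s-1)(c+6)$.
   Context: Graphs are finite and simple; $|G|$ denotes the number of vertices of $G$. Every path has at least one vertex. An ordered induced path is an induced path together with a choice of one of its ends as its first vertex. Two subsets $X,Y$ of $V(G)$ are anticomplete if they are disjoint and no edge joins them; two subgraphs are anticomplete if their vertex sets are. A graph is $s\mathcal{O}$-free if there do not exist $s$ cycles of it that are pairwise vertex-disjoint and pairwise anticomplete. *)

theory Defs
  imports Main
begin

definition graph :: "'a set \<Rightarrow> ('a \<Rightarrow> 'a \<Rightarrow> bool) \<Rightarrow> bool" where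
  "graph V E \<longleftrightarrow> finite V \<and> (\<forall>x y. E x y \<longrightarrow> x \<in> V \<and> y \<in> V \<and> x \<noteq> y \<and> E y x)"

definition is_cycle :: "'a set \<Rightarrow> ('a \<Rightarrow> 'a \<Rightarrow> bool) \<Rightarrow> 'a list \<Rightarrow> bool" where
  "is_cycle V E xs \<longleftrightarrow> length xs \<ge> 3 \<and> distinct xs \<and> set xs \<subseteq> V \<and>
     (\<forall>i < length xs. E (xs ! i) (xs ! ((i + 1) mod length xs)))"

definition anticomplete :: "('a \<Rightarrow> 'a \<Rightarrow> bool) \<Rightarrow> 'a set \<Rightarrow> 'a set \<Rightarrow> bool" where
  "anticomplete E X Y \<longleftrightarrow> X \<inter> Y = {} \<and> (\<forall>x\<in>X. \<forall>y\<in>Y. \<not> E x y)"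

definition sO_free :: "nat \<Rightarrow> 'a set \<Rightarrow> ('a \<Rightarrow> 'a \<Rightarrow> bool) \<Rightarrow> bool" where
  "sO_free s V E \<longleftrightarrow> \<not> (\<exists>Cs. length Cs = s \<and> (\<forall>C\<in>set Cs. is_cycle V E C) \<and>
     (\<forall>i<s. \<forall>j<s. i \<noteq> j \<longrightarrow> anticomplete E (set (Cs ! i)) (set (Cs ! j))))"

definition no_C4 :: "'a set \<Rightarrow> ('a \<Rightarrow> 'a \<Rightarrow> bool) \<Rightarrow> bool" where
  "no_C4 V E \<longleftrightarrow> \<not> (\<exists>xs. is_cycle V E xs \<and> length xs = 4)"

text \<open>An ordered induced path: its vertex sequence starting at the chosen first end.\<close>
definition ordered_induced_path :: "'a set \<Rightarrow> ('a \<Rightarrow> 'a \<Rightarrow> bool) \<Rightarrow> 'a list \<Rightarrow> bool" where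
  "ordered_induced_path V E xs \<longleftrightarrow> xs \<noteq> [] \<and> distinct xs \<and> set xs \<subseteq> V \<and>
     (\<forall>i < length xs. \<forall>j < length xs. E (xs ! i) (xs ! j) \<longleftrightarrow> (i + 1 = j \<or> j + 1 = i))"

definition num_oip :: "'a set \<Rightarrow> ('a \<Rightarrow> 'a \<Rightarrow> bool) \<Rightarrow> nat" where
  "num_oip V E = card {xs. ordered_induced_path V E xs}"

end

theory Submission
  imports Defs
begin

definition sub :: "('a \<Rightarrow> 'a \<Rightarrow> bool) \<Rightarrow> 'a set \<Rightarrow> 'a \<Rightarrow> 'a \<Rightarrow> bool" where
  "sub E W = (\<lambda>x y. E x y \<and> x \<in> W \<and> y \<in> W)"

definition cl :: "('a \<Rightarrow> 'a \<Rightarrow> bool) \<Rightarrow> 'a set \<Rightarrow> 'a set" where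
  "cl E X = X \<union> {y. \<exists>x\<in>X. E x y}"

lemma graph_sub: "graph V E \<Longrightarrow> W \<subseteq> V \<Longrightarrow> graph W (sub E W)"
  unfolding graph_def sub_def by (auto intro: finite_subset)

lemma oip_finite: assumes "finite V" shows "finite {xs. ordered_induced_path V E xs}"
proof -
  have "{xs. ordered_induced_path V E xs} \<subseteq> {xs. set xs \<subseteq> V \<and> length xs \<le> card V}"
  proof
    fix xs assume "xs \<in> {xs. ordered_induced_path V E xs}"
    then have d: "distinct xs" and s: "set xs \<subseteq> V" unfolding ordered_induced_path_def by auto
    have "length xs = card (set xs)" using distinct_card[OF d] by simp
    also have "\<dots> \<le> card V" using card_mono[OF assms s] .
    finally show "xs \<in> {xs. set xs \<subseteq> V \<and> length xs \<le> card V}" using s by simp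
  qed
  then show ?thesis using finite_lists_length_le[OF assms] finite_subset by blast
qed

locale emb =
  fixes h :: "'a \<Rightarrow> 'b" and V1 E1 V2 E2
  assumes g1: "graph V1 E1" and inj: "inj_on h V1" and img: "h ` V1 \<subseteq> V2"
    and adj: "\<And>x y. x \<in> V1 \<Longrightarrow> y \<in> V1 \<Longrightarrow> E2 (h x) (h y) \<longleftrightarrow> E1 x y"
begin

lemma E1V: "E1 x y \<Longrightarrow> x \<in> V1 \<and> y \<in> V1" using g1 unfolding graph_def by blast

lemma cyc: assumes "is_cycle V1 E1 xs" shows "is_cycle V2 E2 (map h xs)"
proof -
  have s: "set xs \<subseteq> V1" using assms unfolding is_cycle_def by blast
  have "E2 (map h xs ! i) (map h xs ! (Suc i mod length xs))" if "i < length xs" for i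
  proof -
    have "0 < length xs" using that by linarith
    then have l: "Suc i mod length xs < length xs" by simp
    have e: "E1 (xs ! i) (xs ! (Suc i mod length xs))" using assms that unfolding is_cycle_def by simp
    then show ?thesis using adj[OF E1V[OF e, THEN conjunct1] E1V[OF e, THEN conjunct2]] that l by simp
  qed
  moreover have "set (map h xs) \<subseteq> V2" using s img by auto
  moreover have "distinct (map h xs)" using assms s unfolding is_cycle_def
    by (simp add: distinct_map inj_on_subset[OF inj])
  ultimately show ?thesis using assms unfolding is_cycle_def by simp
qed

lemma anti: assumes "anticomplete E1 X Y" "X \<subseteq> V1" "Y \<subseteq> V1"
  shows "anticomplete E2 (h ` X) (h ` Y)"
proof -
  have "h ` X \<inter> h ` Y = {}"
  proof (rule ccontr)
    assume "h ` X \<inter> h ` Y \<noteq> {}"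
    then obtain x y where "x \<in> X" "y \<in> Y" "h x = h y" by auto
    then have "x = y" using inj assms(2,3) unfolding inj_on_def by blast
    then show False using assms(1) \<open>x \<in> X\<close> \<open>y \<in> Y\<close> unfolding anticomplete_def by blast
  qed
  moreover have "\<not> E2 (h x) (h y)" if "x \<in> X" "y \<in> Y" for x y
    using adj[of x y] that assms unfolding anticomplete_def by blast
  ultimately show ?thesis unfolding anticomplete_def by blast
qed

lemma sOfree: assumes "sO_free s V2 E2" shows "sO_free s V1 E1"
  unfolding sO_free_def
proof
  assume "\<exists>Cs. length Cs = s \<and> (\<forall>C\<in>set Cs. is_cycle V1 E1 C) \<and>
     (\<forall>i<s. \<forall>j<s. i \<noteq> j \<longrightarrow> anticomplete E1 (set (Cs ! i)) (set (Cs ! j)))"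
  then obtain Cs where C: "length Cs = s" "\<forall>C\<in>set Cs. is_cycle V1 E1 C"
     "\<forall>i<s. \<forall>j<s. i \<noteq> j \<longrightarrow> anticomplete E1 (set (Cs ! i)) (set (Cs ! j))" by blast
  have sV: "\<And>i. i < s \<Longrightarrow> set (Cs ! i) \<subseteq> V1" using C(1,2) unfolding is_cycle_def
    by (metis nth_mem)
  have "length (map (map h) Cs) = s \<and> (\<forall>C\<in>set (map (map h) Cs). is_cycle V2 E2 C) \<and>
     (\<forall>i<s. \<forall>j<s. i \<noteq> j \<longrightarrow> anticomplete E2 (set (map (map h) Cs ! i)) (set (map (map h) Cs ! j)))"
  proof (intro conjI allI impI ballI)
    show "length (map (map h) Cs) = s" using C by simp
    fix C assume "C \<in> set (map (map h) Cs)"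
    then obtain C0 where "C0 \<in> set Cs" "C = map h C0" by auto
    then show "is_cycle V2 E2 C" using C(2) cyc by blast
  next
    fix i j assume ij: "i < s" "j < s" "i \<noteq> j"
    have "anticomplete E2 (h ` set (Cs ! i)) (h ` set (Cs ! j))"
      using anti[OF C(3)[rule_format, OF ij] sV[OF ij(1)] sV[OF ij(2)]] .
    then show "anticomplete E2 (set (map (map h) Cs ! i)) (set (map (map h) Cs ! j))"
      using ij C(1) by simp
  qed
  then show False using assms unfolding sO_free_def by blast
qed

lemma noC4: assumes "no_C4 V2 E2" shows "no_C4 V1 E1"
  using assms cyc unfolding no_C4_def by (metis length_map)

lemma oip: assumes "ordered_induced_path V1 E1 xs" shows "ordered_induced_path V2 E2 (map h xs)"
proof -
  have s: "set xs \<subseteq> V1" using assms unfolding ordered_induced_path_def by blast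
  have "E2 (map h xs ! i) (map h xs ! j) \<longleftrightarrow> (i + 1 = j \<or> j + 1 = i)"
    if "i < length xs" "j < length xs" for i j
  proof -
    have "E2 (map h xs ! i) (map h xs ! j) \<longleftrightarrow> E1 (xs ! i) (xs ! j)"
      using that s by (simp add: adj nth_mem subsetD)
    then show ?thesis using assms that unfolding ordered_induced_path_def by simp
  qed
  moreover have "set (map h xs) \<subseteq> V2" using s img by auto
  moreover have "distinct (map h xs)" using assms s unfolding ordered_induced_path_def
    by (simp add: distinct_map inj_on_subset[OF inj])
  ultimately show ?thesis using assms unfolding ordered_induced_path_def by simp
qed

lemma num: assumes "finite V2" shows "num_oip V1 E1 \<le> num_oip V2 E2"
  unfolding num_oip_def
proof (rule card_inj_on_le[where f="map h"])
  show "inj_on (map h) {xs. ordered_induced_path V1 E1 xs}"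
  proof (rule inj_onI)
    fix xs ys assume "xs \<in> {xs. ordered_induced_path V1 E1 xs}" "ys \<in> {xs. ordered_induced_path V1 E1 xs}"
      and m: "map h xs = map h ys"
    then have "set xs \<union> set ys \<subseteq> V1" unfolding ordered_induced_path_def by auto
    then show "xs = ys" using map_inj_on[OF m] inj_on_subset[OF inj] by blast
  qed
  show "map h ` {xs. ordered_induced_path V1 E1 xs} \<subseteq> {xs. ordered_induced_path V2 E2 xs}"
    using oip by auto
  show "finite {xs. ordered_induced_path V2 E2 xs}" using oip_finite[OF assms] .
qed
end

lemma successively_nth: "successively R xs \<Longrightarrow> Suc i < length xs \<Longrightarrow> R (xs!i) (xs!Suc i)"
proof (induction xs arbitrary: i)
  case (Cons x xs)
  then show ?case by (cases xs; cases i) (auto simp: successively_Cons)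
qed auto

lemma successively_of_nth: "(\<And>i. Suc i < length xs \<Longrightarrow> R (xs!i) (xs!Suc i)) \<Longrightarrow> successively R xs"
proof (induction xs)
  case (Cons x xs)
  have "successively R xs" using Cons.IH Cons.prems by (metis Suc_less_eq length_Cons nth_Cons_Suc)
  moreover have "xs \<noteq> [] \<Longrightarrow> R x (hd xs)" using Cons.prems[of 0] by (cases xs) auto
  ultimately show ?case by (auto simp: successively_Cons)
qed auto

lemma oip_succ: "ordered_induced_path V E xs \<Longrightarrow> successively E xs"
  unfolding ordered_induced_path_def by (auto intro!: successively_of_nth)

lemma succ_distinct: "distinct ys \<Longrightarrow> successively (\<lambda>x y. x = y \<or> E x y) ys \<Longrightarrow> successively E ys"
proof (induction ys)
  case (Cons x xs)
  then show ?case by (cases xs) (auto simp: successively_Cons)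
qed auto

lemma walk_shorten:
  "successively R zs \<Longrightarrow> zs \<noteq> [] \<Longrightarrow> \<exists>ys. distinct ys \<and> successively R ys \<and> hd ys = hd zs
     \<and> last ys = last zs \<and> set ys \<subseteq> set zs \<and> ys \<noteq> []"
proof (induction "length zs" arbitrary: zs rule: less_induct)
  case less
  show ?case
  proof (cases "distinct zs")
    case True then show ?thesis using less.prems by blast
  next
    case False
    then obtain a b c y where z: "zs = a @ [y] @ b @ [y] @ c" using not_distinct_decomp by blast
    define zs' where "zs' = a @ [y] @ c"
    have l: "length zs' < length zs" unfolding zs'_def z by simp
    have "successively R ((a @ [y]) @ (b @ (y # c)))" using less.prems(1) unfolding z by simp
    then have s1: "successively R (a @ [y])" and s2: "successively R (y # c)"
      unfolding successively_append_iff by auto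
    have "successively R c" "c \<noteq> [] \<Longrightarrow> R y (hd c)" using s2 by (auto simp: successively_Cons)
    then have s: "successively R zs'" using s1 unfolding zs'_def
      using successively_append_iff[of R "a @ [y]" c] by auto
    have h: "hd zs' = hd zs" unfolding zs'_def z by (cases a) auto
    have la: "last zs' = last zs" unfolding zs'_def z by (cases c) auto
    have st: "set zs' \<subseteq> set zs" unfolding zs'_def z by auto
    have ne': "zs' \<noteq> []" unfolding zs'_def by simp
    from less.hyps[OF l s ne'] obtain ys where ys: "distinct ys \<and> successively R ys \<and> hd ys = hd zs'
     \<and> last ys = last zs' \<and> set ys \<subseteq> set zs' \<and> ys \<noteq> []" by blast
    show ?thesis apply (rule exI[of _ ys]) using ys h la st by auto
  qed
qed

lemma mk_cycle:
  assumes "u \<notin> set ys" "distinct ys" "successively E ys" "length ys \<ge> 2" "E u (hd ys)"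
    "E (last ys) u" "u \<in> V" "set ys \<subseteq> V"
  shows "is_cycle V E (u # ys)"
proof -
  have ne: "ys \<noteq> []" using assms(4) by auto
  have "E ((u#ys)!i) ((u#ys)!((i+1) mod length (u#ys)))" if i: "i < length (u#ys)" for i
  proof (cases "i = 0")
    case True
    then show ?thesis using assms(4,5) ne by (simp add: hd_conv_nth)
  next
    case False
    show ?thesis
    proof (cases "i = length ys")
      case True
      then show ?thesis using assms(6) ne False by (simp add: last_conv_nth)
    next
      case F2: False
      then have "Suc (i - 1) < length ys" using i False by simp
      from successively_nth[OF assms(3) this] show ?thesis using i False F2
        by (cases i) auto
    qed
  qed
  then show ?thesis unfolding is_cycle_def using assms by auto
qed

lemma no_cyc_of_1free: "sO_free 1 V E \<Longrightarrow> \<not> is_cycle V E C"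
  unfolding sO_free_def
  by (metis One_nat_def length_Cons less_one list.size(3) set_ConsD set_empty2 empty_iff)

lemma forest_unique:
  assumes g: "graph V E" and nc: "\<And>C. \<not> is_cycle V E C"
  shows "distinct P \<Longrightarrow> successively E P \<Longrightarrow> set P \<subseteq> V \<Longrightarrow> P \<noteq> [] \<Longrightarrow>
    distinct Q \<Longrightarrow> successively E Q \<Longrightarrow> set Q \<subseteq> V \<Longrightarrow> Q \<noteq> [] \<Longrightarrow>
    hd P = hd Q \<Longrightarrow> last P = last Q \<Longrightarrow> P = Q"
proof (induction P arbitrary: Q)
  case Nil
  then show ?case by simp
next
  case (Cons a R)
  obtain R' where Q: "Q = a # R'" using Cons.prems(8,9) by (cases Q) auto
  have sym: "E x y \<Longrightarrow> E y x" for x y using g unfolding graph_def by blast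
  show ?case
  proof (cases "R = []")
    case True
    then have "last Q = a" using Cons.prems(10) by simp
    then have "R' = []" using Cons.prems(5) Q by (metis distinct.simps(2) last_ConsR last_in_set)
    then show ?thesis using True Q by simp
  next
    case RNE: False
    show ?thesis
    proof (cases "R' = []")
      case True
      then have "last (a # R) = a" using Cons.prems(10) Q by simp
      then show ?thesis using Cons.prems(1) RNE by (metis distinct.simps(2) last_ConsR last_in_set)
    next
      case R'NE: False
      have lR: "last R = last R'" using Cons.prems(10) Q RNE R'NE by simp
      show ?thesis
      proof (cases "hd R = hd R'")
        case True
        have "R = R'"
          apply (rule Cons.IH)
          using Cons.prems Q RNE R'NE True lR by (auto simp: successively_Cons)
        then show ?thesis using Q by simp
      next
        case False
        define R0 where "R0 = (\<lambda>x y. x = y \<or> E x y)"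
        have s1: "successively R0 R" using Cons.prems(2)
          by (auto simp: successively_Cons R0_def intro: successively_mono)
        have s2: "successively R0 (rev R')" using Cons.prems(6) Q
          by (auto simp: successively_Cons R0_def intro: successively_mono sym)
        have "successively R0 (R @ rev R')" using s1 s2 RNE R'NE lR
          by (auto simp: successively_append_iff R0_def hd_rev)
        from walk_shorten[OF this] obtain ys where ys: "distinct ys" "successively R0 ys"
          "hd ys = hd R" "last ys = hd R'" "set ys \<subseteq> set R \<union> set R'" "ys \<noteq> []"
          using RNE R'NE by (auto simp: last_rev)
        have se: "successively E ys" using succ_distinct ys(1,2) unfolding R0_def by blast
        have l2: "length ys \<ge> 2"
        proof (rule ccontr)
          assume "\<not> length ys \<ge> 2"
          then obtain x where "ys = [x]" using ys(6) by (cases ys) (auto simp: Suc_le_eq)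
          then show False using ys(3,4) False by simp
        qed
        have ua: "a \<notin> set ys" using ys(5) Cons.prems(1,5) Q by auto
        have e1: "E a (hd ys)" using Cons.prems(2) RNE ys(3) by (auto simp: successively_Cons)
        have e2: "E (last ys) a" using Cons.prems(6) Q R'NE ys(4) sym by (auto simp: successively_Cons)
        have "is_cycle V E (a # ys)"
          by (rule mk_cycle[OF ua ys(1) se l2 e1 e2]) (use Cons.prems(3,7) Q ys(5) in auto)
        then show ?thesis using nc by blast
      qed
    qed
  qed
qed

lemma forest_bound:
  assumes g: "graph V E" and f: "sO_free 1 V E"
  shows "num_oip V E \<le> card V ^ 2"
proof -
  have fin: "finite V" using g unfolding graph_def by blast
  have "num_oip V E \<le> card (V \<times> V)" unfolding num_oip_def
  proof (rule card_inj_on_le[where f="\<lambda>P. (hd P, last P)"])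
    show "inj_on (\<lambda>P. (hd P, last P)) {xs. ordered_induced_path V E xs}"
    proof (rule inj_onI)
      fix P Q assume "P \<in> {xs. ordered_induced_path V E xs}" "Q \<in> {xs. ordered_induced_path V E xs}"
        "(hd P, last P) = (hd Q, last Q)"
      then have "ordered_induced_path V E P" "ordered_induced_path V E Q" "hd P = hd Q" "last P = last Q" by auto
      then show "P = Q" using forest_unique[OF g no_cyc_of_1free[OF f]] oip_succ[of V E P] oip_succ[of V E Q]
        unfolding ordered_induced_path_def by blast
    qed
    show "(\<lambda>P. (hd P, last P)) ` {xs. ordered_induced_path V E xs} \<subseteq> V \<times> V"
      unfolding ordered_induced_path_def by auto
    show "finite (V \<times> V)" using fin by simp
  qed
  then show ?thesis by (simp add: card_cartesian_product power2_eq_square)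
qed

lemma transfer_nat:
  assumes H: "\<forall>(V :: nat set) E. graph V E \<and> sO_free s V E \<and> no_C4 V E
           \<longrightarrow> num_oip V E \<le> card V ^ c"
    and g: "graph (W::'a set) E" and f: "sO_free s W E" and n: "no_C4 W E"
  shows "num_oip W E \<le> card W ^ c"
proof -
  define m where "m = card W"
  have fin: "finite W" using g unfolding graph_def by blast
  obtain f where bf: "bij_betw f W {0..<m}" using ex_bij_betw_finite_nat[OF fin] m_def by blast
  define g' where "g' = inv_into W f"
  have bg: "bij_betw g' {0..<m} W" unfolding g'_def using bij_betw_inv_into[OF bf] .
  define E' where "E' = (\<lambda>x y. x < m \<and> y < m \<and> E (g' x) (g' y))"
  have irr: "\<not> E a a" for a using g unfolding graph_def by blast
  have gr': "graph {0..<m} E'" unfolding graph_def E'_def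
    using g irr unfolding graph_def by auto
  interpret e1: emb g' "{0..<m}" E' W E
    apply unfold_locales
    using gr' bg unfolding bij_betw_def E'_def by auto
  have gf: "g' (f a) = a" if "a \<in> W" for a
    unfolding g'_def using bf that by (simp add: bij_betw_def inv_into_f_f)
  have fm: "f a < m" if "a \<in> W" for a using bf that unfolding bij_betw_def by auto
  interpret e2: emb f W E "{0..<m}" E'
    apply unfold_locales
    using g bf unfolding bij_betw_def apply auto[3]
    unfolding E'_def using gf fm by auto
  have "num_oip W E \<le> num_oip {0..<m} E'" using e2.num by simp
  also have "\<dots> \<le> card {0..<m} ^ c"
    using H gr' e1.sOfree[OF f] e1.noC4[OF n] by blast
  finally show ?thesis unfolding m_def by simp
qed

lemma emb_sub: assumes "graph V E" "W \<subseteq> V" shows "emb id W (sub E W) V E"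
  using assms graph_sub[OF assms] by unfold_locales (auto simp: sub_def)

lemma sO_mono: assumes f: "sO_free t V E" and ts: "t \<le> s" shows "sO_free s V E"
  unfolding sO_free_def
proof
  assume "\<exists>Cs. length Cs = s \<and> (\<forall>C\<in>set Cs. is_cycle V E C) \<and>
     (\<forall>i<s. \<forall>j<s. i \<noteq> j \<longrightarrow> anticomplete E (set (Cs ! i)) (set (Cs ! j)))"
  then obtain Cs where C: "length Cs = s" "\<forall>C\<in>set Cs. is_cycle V E C"
    "\<forall>i<s. \<forall>j<s. i \<noteq> j \<longrightarrow> anticomplete E (set (Cs ! i)) (set (Cs ! j))" by blast
  have l: "length (take t Cs) = t" using C(1) ts by simp
  have c: "\<forall>C\<in>set (take t Cs). is_cycle V E C" using C(2) set_take_subset[of t Cs] by blast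
  have a: "\<forall>i<t. \<forall>j<t. i \<noteq> j \<longrightarrow> anticomplete E (set (take t Cs ! i)) (set (take t Cs ! j))"
  proof (intro allI impI)
    fix i j assume "i < t" "j < t" "i \<noteq> j"
    moreover have "i < s" "j < s" using \<open>i < t\<close> \<open>j < t\<close> ts by auto
    ultimately show "anticomplete E (set (take t Cs ! i)) (set (take t Cs ! j))"
      using C(3) by (simp add: nth_take)
  qed
  show False using f l c a unfolding sO_free_def by blast
qed

lemma anti_sym: "anticomplete E X Y \<Longrightarrow> (\<And>x y. E x y \<Longrightarrow> E y x) \<Longrightarrow> anticomplete E Y X"
  unfolding anticomplete_def by blast

lemma sym_of_graph: "graph V E \<Longrightarrow> E x y \<Longrightarrow> E y x" unfolding graph_def by blast

lemma sOfree_minus: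
  assumes g: "graph V E" and f: "sO_free (Suc t) V E" and q: "is_cycle V E q"
  shows "sO_free t (V - cl E (set q)) (sub E (V - cl E (set q)))"
  unfolding sO_free_def
proof
  define W where "W = V - cl E (set q)"
  interpret e: emb id W "sub E W" V E using emb_sub[OF g] W_def by auto
  assume "\<exists>Cs. length Cs = t \<and> (\<forall>C\<in>set Cs. is_cycle (V - cl E (set q)) (sub E (V - cl E (set q))) C) \<and>
     (\<forall>i<t. \<forall>j<t. i \<noteq> j \<longrightarrow> anticomplete (sub E (V - cl E (set q))) (set (Cs ! i)) (set (Cs ! j)))"
  then obtain Cs where C: "length Cs = t" "\<forall>C\<in>set Cs. is_cycle W (sub E W) C"
    "\<forall>i<t. \<forall>j<t. i \<noteq> j \<longrightarrow> anticomplete (sub E W) (set (Cs ! i)) (set (Cs ! j))"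
    unfolding W_def by blast
  have cyc: "is_cycle V E C" if "C \<in> set Cs" for C using e.cyc[of C] C(2) that by simp
  have sW: "set C \<subseteq> W" if "C \<in> set Cs" for C using C(2) that unfolding is_cycle_def by blast
  have aq: "anticomplete E (set q) (set C)" if "C \<in> set Cs" for C
    using sW[OF that] unfolding anticomplete_def W_def cl_def by blast
  have aij: "anticomplete E (set (Cs ! i)) (set (Cs ! j))" if "i < t" "j < t" "i \<noteq> j" for i j
    using e.anti[OF C(3)[rule_format, OF that] sW sW] that C(1) by simp
  have sy: "\<And>x y. E x y \<Longrightarrow> E y x" using sym_of_graph[OF g] by blast
  have "length (q # Cs) = Suc t \<and> (\<forall>C\<in>set (q # Cs). is_cycle V E C) \<and>
     (\<forall>i<Suc t. \<forall>j<Suc t. i \<noteq> j \<longrightarrow> anticomplete E (set ((q # Cs) ! i)) (set ((q # Cs) ! j)))"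
  proof (intro conjI allI impI ballI)
    show "length (q # Cs) = Suc t" using C(1) by simp
    show "is_cycle V E C" if "C \<in> set (q # Cs)" for C using that q cyc by auto
    fix i j assume ij: "i < Suc t" "j < Suc t" "i \<noteq> j"
    show "anticomplete E (set ((q # Cs) ! i)) (set ((q # Cs) ! j))"
    proof (cases i)
      case 0
      then obtain j' where "j = Suc j'" "j' < t" using ij by (cases j) auto
      then show ?thesis using 0 aq[of "Cs ! j'"] C(1) by simp
    next
      case (Suc i')
      show ?thesis
      proof (cases j)
        case 0
        then show ?thesis using Suc ij aq[of "Cs ! i'"] C(1) anti_sym[OF _ sy] by simp
      next
        case (Suc j')
        then show ?thesis using \<open>i = Suc i'\<close> ij aij[of i' j'] by simp
      qed
    qed
  qed
  then show False using f unfolding sO_free_def by blast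
qed

lemma in_take_nth: "y \<in> set (take n xs) \<Longrightarrow> \<exists>i. i < n \<and> i < length xs \<and> y = xs!i"
  by (auto simp: in_set_conv_nth)

lemma in_drop_nth: "y \<in> set (drop n xs) \<Longrightarrow> \<exists>m. n \<le> m \<and> m < length xs \<and> y = xs!m"
  by (auto simp: in_set_conv_nth) (metis add.commute le_add2 less_diff_conv)

lemma oip_take: "ordered_induced_path V E xs \<Longrightarrow> take j xs \<noteq> [] \<Longrightarrow> ordered_induced_path V E (take j xs)"
  unfolding ordered_induced_path_def using set_take_subset[of j xs] by auto

lemma oip_drop: "ordered_induced_path V E xs \<Longrightarrow> drop j xs \<noteq> [] \<Longrightarrow> ordered_induced_path V E (drop j xs)"
  unfolding ordered_induced_path_def using set_drop_subset[of j xs] by auto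

lemma oip_sub: "ordered_induced_path V E xs \<Longrightarrow> set xs \<subseteq> W \<Longrightarrow> ordered_induced_path W (sub E W) xs"
  unfolding ordered_induced_path_def sub_def by (auto simp: nth_mem subsetD)

definition GA :: "('a \<Rightarrow> 'a \<Rightarrow> bool) \<Rightarrow> 'a set \<Rightarrow> 'a set \<Rightarrow> 'a set" where
  "GA E V A = V - cl E A"
definition PA :: "'a set \<Rightarrow> ('a \<Rightarrow> 'a \<Rightarrow> bool) \<Rightarrow> 'a set \<Rightarrow> 'a list set" where
  "PA V E A = {xs. ordered_induced_path (GA E V A) (sub E (GA E V A)) xs}"
definition Tset :: "'a set \<Rightarrow> ('a \<Rightarrow> 'a \<Rightarrow> bool) \<Rightarrow> 'a \<Rightarrow> 'a list \<Rightarrow> 'a list set" where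
  "Tset V E x P2 = (let K = GA E V (insert x (set P2)) in
     if no_C4 K (sub E K) then {xs. ordered_induced_path K (sub E K) xs} else {})"
definition Pre :: "'a set \<Rightarrow> ('a \<Rightarrow> 'a \<Rightarrow> bool) \<Rightarrow> 'a \<Rightarrow> 'a list \<Rightarrow> 'a list set" where
  "Pre V E x P2 = insert [] ((\<lambda>(P,y). P @ [y]) ` (insert [] (Tset V E x P2) \<times> V))"
definition F4 :: "'a set \<Rightarrow> ('a \<Rightarrow> 'a \<Rightarrow> bool) \<Rightarrow> 'a set set" where
  "F4 V E = {A. A \<subseteq> V \<and> card A = 4 \<and> (\<exists>q. is_cycle V E q \<and> length q = 4 \<and> set q = A)}"

lemma disj_sym: "graph V E \<Longrightarrow> X \<inter> cl E Y = {} \<Longrightarrow> Y \<inter> cl E X = {}"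
  unfolding cl_def graph_def by blast

lemma cover:
  assumes g: "graph V E" and nc: "\<not> no_C4 V E" and P: "ordered_induced_path V E P"
  shows "P \<in> (\<Union>A\<in>F4 V E. PA V E A) \<union>
    (\<Union>A\<in>F4 V E. \<Union>P2\<in>insert [] (PA V E A). \<Union>x\<in>V. (\<lambda>P1. P1 @ x # P2) ` Pre V E x P2)"
proof -
  define k where "k = length P"
  define hc where "hc j = (\<exists>q. is_cycle V E q \<and> length q = 4 \<and> set q \<inter> cl E (set (drop j P)) = {})" for j
  have "hc k" using nc unfolding hc_def no_C4_def k_def by (simp add: cl_def)
  define j0 where "j0 = (LEAST j. hc j)"
  have hj0: "hc j0" unfolding j0_def using LeastI[of hc k, OF \<open>hc k\<close>] .
  have j0k: "j0 \<le> k" unfolding j0_def using Least_le[of hc k, OF \<open>hc k\<close>] .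
  have nlt: "\<not> hc j" if "j < j0" for j using not_less_Least[of j hc] that unfolding j0_def by blast
  obtain q where q: "is_cycle V E q" "length q = 4" "set q \<inter> cl E (set (drop j0 P)) = {}"
    using hj0 unfolding hc_def by blast
  define A where "A = set q"
  have "card A = 4" "A \<subseteq> V" using q distinct_card[of q] unfolding is_cycle_def A_def by auto
  then have AF: "A \<in> F4 V E" unfolding F4_def A_def using q by blast
  have PV: "set P \<subseteq> V" using P unfolding ordered_induced_path_def by blast
  have dA: "set (drop j0 P) \<inter> cl E A = {}" using disj_sym[OF g q(3)] A_def by simp
  show ?thesis
  proof (cases "j0 = 0")
    case True
    then have "set P \<subseteq> GA E V A" using dA PV unfolding GA_def by auto
    then have "P \<in> PA V E A" unfolding PA_def using oip_sub[OF P] by blast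
    then show ?thesis using AF by blast
  next
    case False
    define x where "x = P ! (j0 - 1)"
    define P2 where "P2 = drop j0 P"
    define Pf where "Pf = take (j0 - 1) P"
    have jl: "j0 - 1 < length P" using False j0k k_def by simp
    have decomp: "P = Pf @ x # P2" unfolding Pf_def x_def P2_def
      using id_take_nth_drop[OF jl] False by simp
    have xV: "x \<in> V" unfolding x_def using jl PV nth_mem by blast
    have P2in: "P2 \<in> insert [] (PA V E A)"
    proof (cases "P2 = []")
      case False
      have "ordered_induced_path V E P2" using oip_drop[OF P] False unfolding P2_def by blast
      moreover have "set P2 \<subseteq> GA E V A" using dA PV set_drop_subset[of j0 P]
        unfolding GA_def P2_def by blast
      ultimately show ?thesis unfolding PA_def using oip_sub by blast
    qed simp
    have dx: "drop (j0 - 1) P = x # P2" unfolding x_def P2_def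
      using Cons_nth_drop_Suc[OF jl] False by simp
    have Pfin: "Pf \<in> Pre V E x P2"
    proof (cases "Pf = []")
      case True then show ?thesis unfolding Pre_def by simp
    next
      case PfNE: False
      have bt: "butlast Pf = take (j0 - 2) P" unfolding Pf_def using butlast_take jl
        by (metis diff_diff_left less_or_eq_imp_le one_add_one)
      have lV: "last Pf \<in> V" using PfNE PV set_take_subset[of "j0-1" P] unfolding Pf_def
        by (meson last_in_set subsetD)
      have bin: "butlast Pf \<in> insert [] (Tset V E x P2)"
      proof (cases "butlast Pf = []")
        case bNE: False
        define K where "K = GA E V (insert x (set P2))"
        have Kd: "K = V - cl E (set (drop (j0 - 1) P))" unfolding K_def GA_def dx by simp
        have KV: "K \<subseteq> V" unfolding K_def GA_def by blast
        interpret e: emb id K "sub E K" V E using emb_sub[OF g KV] .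
        have nK: "no_C4 K (sub E K)"
          unfolding no_C4_def
        proof
          assume "\<exists>xs. is_cycle K (sub E K) xs \<and> length xs = 4"
          then obtain xs where xs: "is_cycle K (sub E K) xs" "length xs = 4" by blast
          have "is_cycle V E xs" using e.cyc[OF xs(1)] by simp
          moreover have "set xs \<subseteq> K" using xs(1) unfolding is_cycle_def by blast
          ultimately have "hc (j0 - 1)" unfolding hc_def using xs(2) Kd by blast
          then show False using nlt False by simp
        qed
        have "ordered_induced_path V E (butlast Pf)" using oip_take[OF P] bNE bt by simp
        moreover have "set (butlast Pf) \<subseteq> K"
        proof
          fix y assume "y \<in> set (butlast Pf)"
          then obtain i where i: "i < j0 - 2" "i < length P" "y = P ! i"
            using in_take_nth[of y "j0-2" P] bt by auto
          have yV: "y \<in> V" using i PV nth_mem by blast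
          have "y \<notin> cl E (set (drop (j0 - 1) P))"
          proof
            assume "y \<in> cl E (set (drop (j0 - 1) P))"
            then obtain z where z: "z \<in> set (drop (j0 - 1) P)" "z = y \<or> E z y" unfolding cl_def by blast
            obtain m where m: "j0 - 1 \<le> m" "m < length P" "z = P ! m" using in_drop_nth[OF z(1)] by blast
            have im: "i \<noteq> m" using i m by simp
            have d: "distinct P" using P unfolding ordered_induced_path_def by blast
            show False
            proof (cases "z = y")
              case True
              then show False using nth_eq_iff_index_eq[OF d m(2) i(2)] im i m by simp
            next
              case False
              then have "E (P ! m) (P ! i)" using z m i by simp
              then have "m + 1 = i \<or> i + 1 = m" using P m(2) i(2) unfolding ordered_induced_path_def by blast
              then show False using i m by linarith
            qed
          qed
          then show "y \<in> K" using yV Kd by blast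
        qed
        ultimately have "butlast Pf \<in> Tset V E x P2" unfolding Tset_def Let_def K_def[symmetric]
          using nK oip_sub by simp
        then show ?thesis by simp
      qed simp
      have "Pf = (\<lambda>(P,y). P @ [y]) (butlast Pf, last Pf)" using PfNE by simp
      moreover have "(butlast Pf, last Pf) \<in> insert [] (Tset V E x P2) \<times> V" using bin lV by blast
      ultimately have "Pf \<in> (\<lambda>(P,y). P @ [y]) ` (insert [] (Tset V E x P2) \<times> V)" by (rule image_eqI)
      then show ?thesis unfolding Pre_def by blast
    qed
    have "P \<in> (\<lambda>P1. P1 @ x # P2) ` Pre V E x P2" using decomp Pfin by blast
    then show ?thesis using AF P2in xV by blast
  qed
qed

lemma arith_bound:
  fixes n F a b :: nat
  assumes n4: "4 \<le> n" and a1: "1 \<le> a" and nb: "n \<le> b" and F: "F * 24 \<le> n^4"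
  shows "F * a + F * ((a + 1) * (n * (1 + (b + 1) * n))) \<le> n^4 * (a * b * n^2)"
proof -
  define p where "p = a * b * n^2"
  have h1: "a + 1 \<le> 2 * a" using a1 by simp
  have nn: "n \<le> n^2" using n4 by (simp add: power2_eq_square)
  have bn: "4 * n^2 \<le> b * n^2" using n4 nb by simp
  have h2: "n * (1 + (b + 1) * n) \<le> 2 * (b * n^2)"
  proof -
    have "n * (1 + (b + 1) * n) = n + b * n^2 + n^2" by (simp add: algebra_simps power2_eq_square)
    also have "\<dots> \<le> 2 * (b * n^2)" using nn bn by linarith
    finally show ?thesis .
  qed
  have h3: "(a + 1) * (n * (1 + (b + 1) * n)) \<le> (2 * a) * (2 * (b * n^2))"
    by (rule mult_le_mono[OF h1 h2])
  have h3': "(2 * a) * (2 * (b * n^2)) = 4 * p" unfolding p_def by (simp add: algebra_simps)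
  have bpos: "1 \<le> b * n^2" using n4 nb by (simp add: Suc_le_eq)
  have h4: "a \<le> p" unfolding p_def using mult_le_mono[OF order_refl bpos, of a] by (simp add: algebra_simps)
  have X: "a + (a + 1) * (n * (1 + (b + 1) * n)) \<le> 5 * p" using h3 h3' h4 by linarith
  have "24 * (F * (a + (a + 1) * (n * (1 + (b + 1) * n)))) \<le> 24 * (F * (5 * p))"
    using X by simp
  also have "\<dots> = 5 * ((F * 24) * p)" by simp
  also have "\<dots> \<le> 5 * (n^4 * p)" using mult_le_mono1[OF F, of p] by (simp only: mult_le_mono2)
  also have "\<dots> \<le> 24 * (n^4 * p)" by simp
  finally have "F * (a + (a + 1) * (n * (1 + (b + 1) * n))) \<le> n^4 * p" by simp
  then show ?thesis unfolding p_def by (simp add: algebra_simps)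
qed

lemma card_insert_le': "finite S \<Longrightarrow> card (insert a S) \<le> card S + 1"
  by (simp add: card_insert_if)

lemma card_F4: assumes "finite V" shows "card (F4 V E) * 24 \<le> card V ^ 4"
proof -
  have "F4 V E \<subseteq> {B. B \<subseteq> V \<and> card B = 4}" unfolding F4_def by blast
  then have "card (F4 V E) \<le> card {B. B \<subseteq> V \<and> card B = 4}"
    by (rule card_mono[rotated]) (use assms in simp)
  also have "\<dots> = card V choose 4" using n_subsets[OF assms] .
  finally have "card (F4 V E) * fact 4 \<le> (card V choose 4) * fact 4" by simp
  also have "\<dots> \<le> card V ^ 4" by (rule binomial_fact_pow)
  finally show ?thesis by (simp add: fact_numeral)
qed

lemma card_UN_bound:
  assumes "finite I" "\<And>i. i \<in> I \<Longrightarrow> card (B i) \<le> M"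
  shows "card (\<Union>i\<in>I. B i) \<le> card I * M"
proof -
  have "card (\<Union>i\<in>I. B i) \<le> (\<Sum>i\<in>I. card (B i))" using card_UN_le[OF assms(1)] .
  also have "\<dots> \<le> of_nat (card I) * M" by (rule sum_bounded_above) (use assms(2) in blast)
  finally show ?thesis by simp
qed

lemma step:
  fixes V :: "'a set"
  assumes g: "graph V E" and fr: "sO_free (Suc t) V E"
    and IH: "\<And>(W::'a set) E'. graph W E' \<Longrightarrow> sO_free t W E' \<Longrightarrow> num_oip W E' \<le> card W ^ d"
    and HC: "\<And>(W::'a set) E'. graph W E' \<Longrightarrow> sO_free (Suc t) W E' \<Longrightarrow> no_C4 W E' \<Longrightarrow> num_oip W E' \<le> card W ^ c"
    and c1: "1 \<le> c"
  shows "num_oip V E \<le> card V ^ (d + c + 6)"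
proof -
  define n where "n = card V"
  have fin: "finite V" using g unfolding graph_def by blast
  show ?thesis
  proof (cases "no_C4 V E")
    case True
    have h: "num_oip V E \<le> n ^ c" using HC[OF g fr True] n_def by simp
    show ?thesis
    proof (cases "n = 0")
      case True
      have z: "(0::nat) ^ c = 0" using c1 by simp
      have "num_oip V E = 0" using h unfolding True z by simp
      then show ?thesis by simp
    next
      case False
      then have "n ^ c \<le> n ^ (d + c + 6)" by (intro power_increasing) auto
      then show ?thesis using h n_def by simp
    qed
  next
    case False
    then obtain q0 where q0: "is_cycle V E q0" "length q0 = 4" unfolding no_C4_def by blast
    have n4: "4 \<le> n" unfolding n_def using q0 distinct_card[of q0] card_mono[OF fin, of "set q0"]
      unfolding is_cycle_def by auto
    have fF: "finite (F4 V E)" using fin unfolding F4_def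
      by (rule finite_subset[rotated, OF finite_Pow_iff[THEN iffD2]]) auto
    have GAV: "GA E V A \<subseteq> V" for A unfolding GA_def by blast
    have fGA: "finite (GA E V A)" for A using finite_subset[OF GAV fin] .
    have fPA: "finite (PA V E A)" for A unfolding PA_def by (rule oip_finite[OF fGA])
    have fT: "finite (Tset V E x P2)" for x P2 unfolding Tset_def Let_def
      using oip_finite[OF fGA] by simp
    have fPre: "finite (Pre V E x P2)" for x P2 unfolding Pre_def using fT fin by simp
    have cGA: "card (GA E V A) \<le> n" for A unfolding n_def using card_mono[OF fin GAV] .
    have bPA: "card (PA V E A) \<le> n ^ d" if AF: "A \<in> F4 V E" for A
    proof -
      obtain q where q: "is_cycle V E q" "set q = A" using AF unfolding F4_def by blast
      have "sO_free t (GA E V A) (sub E (GA E V A))" using sOfree_minus[OF g fr q(1)] q(2)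
        unfolding GA_def by simp
      then have "card (PA V E A) \<le> card (GA E V A) ^ d" unfolding PA_def num_oip_def[symmetric]
        using IH graph_sub[OF g GAV] by blast
      also have "\<dots> \<le> n ^ d" using cGA by (rule power_mono) simp
      finally show ?thesis .
    qed
    have bT: "card (Tset V E x P2) \<le> n ^ c" for x P2
    proof (cases "no_C4 (GA E V (insert x (set P2))) (sub E (GA E V (insert x (set P2))))")
      case True
      define K where "K = GA E V (insert x (set P2))"
      interpret e: emb id K "sub E K" V E using emb_sub[OF g GAV] unfolding K_def .
      have "card (Tset V E x P2) = num_oip K (sub E K)"
        unfolding Tset_def Let_def num_oip_def K_def[symmetric] using True K_def by simp
      also have "\<dots> \<le> card K ^ c" using HC[OF graph_sub[OF g] e.sOfree[OF fr]] True K_def GAV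
        by simp
      also have "\<dots> \<le> n ^ c" using cGA K_def by (intro power_mono) auto
      finally show ?thesis .
    next
      case False then show ?thesis unfolding Tset_def Let_def by simp
    qed
    have bPre: "card (Pre V E x P2) \<le> 1 + (n ^ c + 1) * n" for x P2
    proof -
      have "card (Pre V E x P2) \<le> card ((\<lambda>(P,y). P @ [y]) ` (insert [] (Tset V E x P2) \<times> V)) + 1"
        unfolding Pre_def by (rule card_insert_le') (use fT fin in simp)
      also have "card ((\<lambda>(P,y). P @ [y]) ` (insert [] (Tset V E x P2) \<times> V))
          \<le> card (insert [] (Tset V E x P2) \<times> V)" by (rule card_image_le) (use fT fin in simp)
      also have "\<dots> = card (insert [] (Tset V E x P2)) * n" unfolding n_def by (rule card_cartesian_product)
      also have "\<dots> \<le> (n ^ c + 1) * n"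
        using card_insert_le'[OF fT, of "[]" x P2] bT[of x P2] by (intro mult_le_mono1) linarith
      finally show ?thesis by simp
    qed
    define U1 where "U1 = (\<Union>A\<in>F4 V E. PA V E A)"
    define U2 where "U2 = (\<Union>A\<in>F4 V E. \<Union>P2\<in>insert [] (PA V E A). \<Union>x\<in>V. (\<lambda>P1. P1 @ x # P2) ` Pre V E x P2)"
    have sub: "{xs. ordered_induced_path V E xs} \<subseteq> U1 \<union> U2"
      using cover[OF g False] unfolding U1_def U2_def by blast
    have fU: "finite (U1 \<union> U2)" unfolding U1_def U2_def using fF fPA fPre fin by simp
    have cU1: "card U1 \<le> card (F4 V E) * n ^ d" unfolding U1_def
      by (rule card_UN_bound[OF fF bPA])
    have cU2: "card U2 \<le> card (F4 V E) * ((n ^ d + 1) * (n * (1 + (n ^ c + 1) * n)))"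
      unfolding U2_def
    proof (rule card_UN_bound[OF fF])
      fix A assume A: "A \<in> F4 V E"
      show "card (\<Union>P2\<in>insert [] (PA V E A). \<Union>x\<in>V. (\<lambda>P1. P1 @ x # P2) ` Pre V E x P2)
          \<le> (n ^ d + 1) * (n * (1 + (n ^ c + 1) * n))"
      proof -
        have "card (\<Union>P2\<in>insert [] (PA V E A). \<Union>x\<in>V. (\<lambda>P1. P1 @ x # P2) ` Pre V E x P2)
          \<le> card (insert [] (PA V E A)) * (n * (1 + (n ^ c + 1) * n))"
        proof (rule card_UN_bound)
          show "finite (insert [] (PA V E A))" using fPA by simp
          fix P2
          show "card (\<Union>x\<in>V. (\<lambda>P1. P1 @ x # P2) ` Pre V E x P2) \<le> n * (1 + (n ^ c + 1) * n)"
            unfolding n_def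
          proof (rule card_UN_bound[OF fin])
            fix x
            show "card ((\<lambda>P1. P1 @ x # P2) ` Pre V E x P2) \<le> 1 + (card V ^ c + 1) * card V"
              using card_image_le[OF fPre, of "\<lambda>P1. P1 @ x # P2" x P2] bPre[of x P2] n_def by simp
          qed
        qed
        also have "\<dots> \<le> (n ^ d + 1) * (n * (1 + (n ^ c + 1) * n))"
          using card_insert_le'[OF fPA, of "[]" A] bPA[OF A] by (intro mult_le_mono1) linarith
        finally show ?thesis .
      qed
    qed
    have "num_oip V E \<le> card (U1 \<union> U2)" unfolding num_oip_def by (rule card_mono[OF fU sub])
    also have "\<dots> \<le> card U1 + card U2" by (rule card_Un_le)
    also have "\<dots> \<le> card (F4 V E) * n ^ d + card (F4 V E) * ((n ^ d + 1) * (n * (1 + (n ^ c + 1) * n)))"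
      using cU1 cU2 by linarith
    also have "\<dots> \<le> n^4 * (n ^ d * n ^ c * n^2)"
    proof (rule arith_bound[OF n4])
      show "1 \<le> n ^ d" using n4 by simp
      show "n \<le> n ^ c" using n4 c1 by (metis less_le_trans not_less power_increasing_iff power_one_right zero_less_numeral one_less_numeral_iff semiring_norm(76))
      show "card (F4 V E) * 24 \<le> n ^ 4" using card_F4[OF fin] n_def by simp
    qed
    also have "\<dots> = n ^ (d + c + 6)" by (simp add: power_add power_numeral_reduce algebra_simps)
    finally show ?thesis unfolding n_def .
  qed
qed

lemma induct_main:
  fixes s c :: nat
  assumes H: "\<forall>(V :: nat set) E. graph V E \<and> sO_free s V E \<and> no_C4 V E
           \<longrightarrow> num_oip V E \<le> card V ^ c" and c1: "1 \<le> c"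
  shows "1 \<le> t \<Longrightarrow> t \<le> s \<Longrightarrow> graph (V::'a set) E \<Longrightarrow> sO_free t V E \<Longrightarrow>
    num_oip V E \<le> card V ^ (2 + (t - 1) * (c + 6))"
proof (induction t arbitrary: V E)
  case 0 then show ?case by simp
next
  case (Suc t)
  show ?case
  proof (cases "t = 0")
    case True
    then show ?thesis using forest_bound[OF Suc.prems(3)] Suc.prems(4) by simp
  next
    case False
    have IH: "num_oip W E' \<le> card W ^ (2 + (t - 1) * (c + 6))" if "graph W E'" "sO_free t W E'"
      for W :: "'a set" and E'
      using Suc.IH[OF _ _ that] False Suc.prems(2) by simp
    have HC: "num_oip W E' \<le> card W ^ c" if "graph W E'" "sO_free (Suc t) W E'" "no_C4 W E'"
      for W :: "'a set" and E'
      using transfer_nat[OF H that(1) sO_mono[OF that(2) Suc.prems(2)] that(3)] .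
    have "num_oip V E \<le> card V ^ ((2 + (t - 1) * (c + 6)) + c + 6)"
      by (rule step[OF Suc.prems(3,4) IH HC c1])
    moreover have "(2 + (t - 1) * (c + 6)) + c + 6 = 2 + (Suc t - 1) * (c + 6)"
      using False by (cases t) (auto simp: algebra_simps)
    ultimately show ?thesis by metis
  qed
qed

theorem mainTheorem4:
  fixes s c :: nat
  assumes "s \<ge> 1" and "c \<ge> 1"
    and "\<forall>(V :: nat set) E. graph V E \<and> sO_free s V E \<and> no_C4 V E
           \<longrightarrow> num_oip V E \<le> card V ^ c"
  shows "\<forall>(V :: 'a set) E. graph V E \<and> sO_free s V E
           \<longrightarrow> num_oip V E \<le> card V ^ (2 + (s - 1) * (c + 6))"
  using induct_main[OF assms(3,2) assms(1) order_refl] by blast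

end
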